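(* Let $b\ge 2$ be an integer and $p\ge 5$ a prime. Then every extra-special $p$-group $G$ of order $p^{4b+1}$ admits a diagonal double Kodaira structure of non-strong type $(b,\,p)$.
   Context: Notation: $[x,y]=xyx^{-1}y^{-1}$; $o(x)$ is the order of $x$. Definition (diagonal double Kodaira structure). Let $G$ be a finite group and $b,n\ge 2$ integers. A diagonal double Kodaira structure of type $(b,n)$ on $G$ is a set of $4b+1$ elements $\mathsf{r}_{11},\mathsf{t}_{11},\dots,\mathsf{r}_{1b},\mathsf{t}_{1b},\mathsf{r}_{21},\mathsf{t}_{21},\dots,\mathsf{r}_{2b},\mathsf{t}_{2b},\mathsf{z}$ which generate $G$, with $o(\mathsf{z})=n$, satisfying the following relations for all $j,k\in\{1,\dots,b\}$: (Surface relations) $[\mathsf{r}_{1b}^{-1},\mathsf{t}_{1b}^{-1}]\,\mathsf{t}_{1b}^{-1}\,[\mathsf{r}_{1,b-1}^{-1},\mathsf{t}_{1,b-1}^{-1}]\,\mathsf{t}_{1,b-1}^{-1}\cdots[\mathsf{r}_{11}^{-1},\mathsf{t}_{11}^{-1}]\,\mathsf{t}_{11}^{-1}\,(\mathsf{t}_{11}\mathsf{t}_{12}\cdots\mathsf{t}_{1b})=\mathsf{z}$, $[\mathsf{r}_{21}^{-1},\mathsf{t}_{21}]\,\mathsf{t}_{21}\,[\mathsf{r}_{22}^{-1},\mathsf{t}_{22}]\,\mathsf{t}_{22}\cdots[\mathsf{r}_{2b}^{-1},\mathsf{t}_{2b}]\,\mathsf{t}_{2b}\,(\mathsf{t}_{2b}^{-1}\mathsf{t}_{2,b-1}^{-1}\cdots\mathsf{t}_{21}^{-1})=\mathsf{z}^{-1}$.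 (Action of $\mathsf{r}_{1j}$) $[\mathsf{r}_{1j},\mathsf{r}_{2k}]=1$ if $j<k$; $[\mathsf{r}_{1j},\mathsf{r}_{2j}]=1$; $[\mathsf{r}_{1j},\mathsf{r}_{2k}]=\mathsf{z}^{-1}\mathsf{r}_{2k}\mathsf{r}_{2j}^{-1}\mathsf{z}\mathsf{r}_{2j}\mathsf{r}_{2k}^{-1}$ if $j>k$; $[\mathsf{r}_{1j},\mathsf{t}_{2k}]=1$ if $j<k$; $[\mathsf{r}_{1j},\mathsf{t}_{2j}]=\mathsf{z}^{-1}$; $[\mathsf{r}_{1j},\mathsf{t}_{2k}]=[\mathsf{z}^{-1},\mathsf{t}_{2k}]$ if $j>k$; $[\mathsf{r}_{1j},\mathsf{z}]=[\mathsf{r}_{2j}^{-1},\mathsf{z}]$. (Action of $\mathsf{t}_{1j}$) $[\mathsf{t}_{1j},\mathsf{r}_{2k}]=1$ if $j<k$; $[\mathsf{t}_{1j},\mathsf{r}_{2j}]=\mathsf{t}_{2j}^{-1}\mathsf{z}\mathsf{t}_{2j}$; $[\mathsf{t}_{1j},\mathsf{r}_{2k}]=[\mathsf{t}_{2j}^{-1},\mathsf{z}]$ if $j>k$; $[\mathsf{t}_{1j},\mathsf{t}_{2k}]=1$ if $j<k$; $[\mathsf{t}_{1j},\mathsf{t}_{2j}]=[\mathsf{t}_{2j}^{-1},\mathsf{z}]$; $[\mathsf{t}_{1j},\mathsf{t}_{2k}]=\mathsf{t}_{2j}^{-1}\mathsf{z}\mathsf{t}_{2j}\mathsf{z}^{-1}\mathsf{t}_{2k}\mathsf{z}\mathsf{t}_{2j}^{-1}\mathsf{z}^{-1}\mathsf{t}_{2j}\mathsf{t}_{2k}^{-1}$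 if $j>k$; $[\mathsf{t}_{1j},\mathsf{z}]=[\mathsf{t}_{2j}^{-1},\mathsf{z}]$. Such a structure is of strong type $(b,n)$ if both $K_1:=\langle \mathsf{r}_{11},\mathsf{t}_{11},\dots,\mathsf{r}_{1b},\mathsf{t}_{1b},\mathsf{z}\rangle$ and $K_2:=\langle \mathsf{r}_{21},\mathsf{t}_{21},\dots,\mathsf{r}_{2b},\mathsf{t}_{2b},\mathsf{z}\rangle$ equal $G$, and of non-strong type otherwise. Definition. For a prime $p$, a finite $p$-group $G$ is extra-special if its center $Z(G)$ is cyclic of order $p$ and $G/Z(G)$ is a non-trivial elementary abelian $p$-group. *)

theory Defs
  imports "HOL-Algebra.Algebra"
begin

definition gcomm :: "('a, 'b) monoid_scheme \<Rightarrow> 'a \<Rightarrow> 'a \<Rightarrow> 'a" where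
  "gcomm G x y = x \<otimes>\<^bsub>G\<^esub> y \<otimes>\<^bsub>G\<^esub> inv\<^bsub>G\<^esub> x \<otimes>\<^bsub>G\<^esub> inv\<^bsub>G\<^esub> y"

definition gprod :: "('a, 'b) monoid_scheme \<Rightarrow> 'a list \<Rightarrow> 'a" where
  "gprod G xs = foldr (\<lambda>x y. x \<otimes>\<^bsub>G\<^esub> y) xs \<one>\<^bsub>G\<^esub>"

definition group_center :: "('a, 'b) monoid_scheme \<Rightarrow> 'a set" where
  "group_center G = {z \<in> carrier G. \<forall>x \<in> carrier G. z \<otimes>\<^bsub>G\<^esub> x = x \<otimes>\<^bsub>G\<^esub> z}"

definition diagonal_double_kodaira ::
  "('a, 'b) monoid_scheme \<Rightarrow> nat \<Rightarrow> nat \<Rightarrow> (nat \<Rightarrow> 'a) \<Rightarrow> (nat \<Rightarrow> 'a)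
     \<Rightarrow> (nat \<Rightarrow> 'a) \<Rightarrow> (nat \<Rightarrow> 'a) \<Rightarrow> 'a \<Rightarrow> bool" where
  "diagonal_double_kodaira G b n r1 t1 r2 t2 z \<longleftrightarrow>
     (\<forall>j\<in>{1..b}. r1 j \<in> carrier G \<and> t1 j \<in> carrier G \<and> r2 j \<in> carrier G \<and> t2 j \<in> carrier G)
   \<and> z \<in> carrier G
   \<and> generate G (r1 ` {1..b} \<union> t1 ` {1..b} \<union> r2 ` {1..b} \<union> t2 ` {1..b} \<union> {z}) = carrier G
   \<and> group.ord G z = n
   \<comment> \<open>surface relations\<close>
   \<and> gprod G (map (\<lambda>j. gcomm G (inv\<^bsub>G\<^esub> (r1 j)) (inv\<^bsub>G\<^esub> (t1 j)) \<otimes>\<^bsub>G\<^esub> inv\<^bsub>G\<^esub> (t1 j)) (rev [1..<b+1]))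
       \<otimes>\<^bsub>G\<^esub> gprod G (map t1 [1..<b+1]) = z
   \<and> gprod G (map (\<lambda>j. gcomm G (inv\<^bsub>G\<^esub> (r2 j)) (t2 j) \<otimes>\<^bsub>G\<^esub> t2 j) [1..<b+1])
       \<otimes>\<^bsub>G\<^esub> gprod G (map (\<lambda>j. inv\<^bsub>G\<^esub> (t2 j)) (rev [1..<b+1])) = inv\<^bsub>G\<^esub> z
   \<and> (\<forall>j\<in>{1..b}. \<forall>k\<in>{1..b}.
      \<comment> \<open>action of r_{1j}\<close>
        (j < k \<longrightarrow> gcomm G (r1 j) (r2 k) = \<one>\<^bsub>G\<^esub>)
      \<and> (j = k \<longrightarrow> gcomm G (r1 j) (r2 k) = \<one>\<^bsub>G\<^esub>)
      \<and> (j > k \<longrightarrow> gcomm G (r1 j) (r2 k) =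
            inv\<^bsub>G\<^esub> z \<otimes>\<^bsub>G\<^esub> r2 k \<otimes>\<^bsub>G\<^esub> inv\<^bsub>G\<^esub> (r2 j) \<otimes>\<^bsub>G\<^esub> z \<otimes>\<^bsub>G\<^esub> r2 j \<otimes>\<^bsub>G\<^esub> inv\<^bsub>G\<^esub> (r2 k))
      \<and> (j < k \<longrightarrow> gcomm G (r1 j) (t2 k) = \<one>\<^bsub>G\<^esub>)
      \<and> (j = k \<longrightarrow> gcomm G (r1 j) (t2 k) = inv\<^bsub>G\<^esub> z)
      \<and> (j > k \<longrightarrow> gcomm G (r1 j) (t2 k) = gcomm G (inv\<^bsub>G\<^esub> z) (t2 k))
      \<comment> \<open>action of t_{1j}\<close>
      \<and> (j < k \<longrightarrow> gcomm G (t1 j) (r2 k) = \<one>\<^bsub>G\<^esub>)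
      \<and> (j = k \<longrightarrow> gcomm G (t1 j) (r2 k) = inv\<^bsub>G\<^esub> (t2 j) \<otimes>\<^bsub>G\<^esub> z \<otimes>\<^bsub>G\<^esub> t2 j)
      \<and> (j > k \<longrightarrow> gcomm G (t1 j) (r2 k) = gcomm G (inv\<^bsub>G\<^esub> (t2 j)) z)
      \<and> (j < k \<longrightarrow> gcomm G (t1 j) (t2 k) = \<one>\<^bsub>G\<^esub>)
      \<and> (j = k \<longrightarrow> gcomm G (t1 j) (t2 k) = gcomm G (inv\<^bsub>G\<^esub> (t2 j)) z)
      \<and> (j > k \<longrightarrow> gcomm G (t1 j) (t2 k) =
            inv\<^bsub>G\<^esub> (t2 j) \<otimes>\<^bsub>G\<^esub> z \<otimes>\<^bsub>G\<^esub> t2 j \<otimes>\<^bsub>G\<^esub> inv\<^bsub>G\<^esub> z \<otimes>\<^bsub>G\<^esub> t2 k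
            \<otimes>\<^bsub>G\<^esub> z \<otimes>\<^bsub>G\<^esub> inv\<^bsub>G\<^esub> (t2 j) \<otimes>\<^bsub>G\<^esub> inv\<^bsub>G\<^esub> z \<otimes>\<^bsub>G\<^esub> t2 j \<otimes>\<^bsub>G\<^esub> inv\<^bsub>G\<^esub> (t2 k)))
   \<and> (\<forall>j\<in>{1..b}.
        gcomm G (r1 j) z = gcomm G (inv\<^bsub>G\<^esub> (r2 j)) z
      \<and> gcomm G (t1 j) z = gcomm G (inv\<^bsub>G\<^esub> (t2 j)) z)"

text \<open>Strong type: both K1 and K2 equal G.\<close>
definition ddk_strong ::
  "('a, 'b) monoid_scheme \<Rightarrow> nat \<Rightarrow> (nat \<Rightarrow> 'a) \<Rightarrow> (nat \<Rightarrow> 'a)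
     \<Rightarrow> (nat \<Rightarrow> 'a) \<Rightarrow> (nat \<Rightarrow> 'a) \<Rightarrow> 'a \<Rightarrow> bool" where
  "ddk_strong G b r1 t1 r2 t2 z \<longleftrightarrow>
     generate G (r1 ` {1..b} \<union> t1 ` {1..b} \<union> {z}) = carrier G
   \<and> generate G (r2 ` {1..b} \<union> t2 ` {1..b} \<union> {z}) = carrier G"

definition extra_special :: "('a, 'b) monoid_scheme \<Rightarrow> nat \<Rightarrow> bool" where
  "extra_special G p \<longleftrightarrow>
     Factorial_Ring.prime p \<and> finite (carrier G) \<and> (\<exists>k. order G = p ^ k)
   \<and> cyclic_group (subgroup_generated G (group_center G))
   \<and> card (group_center G) = p
   \<and> comm_group (G Mod (group_center G))
   \<and> (\<forall>c \<in> carrier (G Mod (group_center G)). c [^]\<^bsub>G Mod (group_center G)\<^esub> p = \<one>\<^bsub>G Mod (group_center G)\<^esub>)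
   \<and> carrier (G Mod (group_center G)) \<noteq> {\<one>\<^bsub>G Mod (group_center G)\<^esub>}"

end

theory Submission imports Defs
begin

context group begin

lemma inv_cancel_l1[simp]: "x \<in> carrier G \<Longrightarrow> y \<in> carrier G \<Longrightarrow> inv x \<otimes> (x \<otimes> y) = y"
  by (simp flip: m_assoc)
lemma inv_cancel_l2[simp]: "x \<in> carrier G \<Longrightarrow> y \<in> carrier G \<Longrightarrow> x \<otimes> (inv x \<otimes> y) = y"
  by (simp flip: m_assoc)

lemma center_sub: "group_center G \<subseteq> carrier G"
  unfolding group_center_def by auto

lemma center_subgroup: "subgroup (group_center G) G"
proof (rule subgroupI)
  show "group_center G \<subseteq> carrier G" by (rule center_sub)
  show "group_center G \<noteq> {}" unfolding group_center_def by auto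
next
  fix a assume a: "a \<in> group_center G"
  then have ac: "a \<in> carrier G" and ax: "\<And>x. x \<in> carrier G \<Longrightarrow> a \<otimes> x = x \<otimes> a"
    unfolding group_center_def by auto
  show "inv a \<in> group_center G" unfolding group_center_def
  proof (intro CollectI conjI ballI)
    fix x assume x: "x \<in> carrier G"
    have "inv a \<otimes> x = inv a \<otimes> x \<otimes> a \<otimes> inv a" using ac x by (simp add: m_assoc)
    also have "\<dots> = inv a \<otimes> (x \<otimes> a) \<otimes> inv a" using ac x by (simp add: m_assoc)
    also have "\<dots> = inv a \<otimes> (a \<otimes> x) \<otimes> inv a" using ax[OF x] by simp
    also have "\<dots> = inv a \<otimes> a \<otimes> x \<otimes> inv a" using ac x by (simp add: m_assoc)
    also have "\<dots> = x \<otimes> inv a" using ac x by simp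
    finally show "inv a \<otimes> x = x \<otimes> inv a" .
  qed (use ac in auto)
next
  fix a b assume a: "a \<in> group_center G" and b: "b \<in> group_center G"
  then have ac: "a \<in> carrier G" and ax: "\<And>x. x \<in> carrier G \<Longrightarrow> a \<otimes> x = x \<otimes> a"
    and bc: "b \<in> carrier G" and bx: "\<And>x. x \<in> carrier G \<Longrightarrow> b \<otimes> x = x \<otimes> b"
    unfolding group_center_def by auto
  show "a \<otimes> b \<in> group_center G" unfolding group_center_def
  proof (intro CollectI conjI ballI)
    fix x assume x: "x \<in> carrier G"
    have "a \<otimes> b \<otimes> x = a \<otimes> (b \<otimes> x)" using ac bc x by (simp add: m_assoc)
    also have "\<dots> = a \<otimes> (x \<otimes> b)" using bx[OF x] by simp
    also have "\<dots> = (a \<otimes> x) \<otimes> b" using ac bc x by (simp add: m_assoc)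
    also have "\<dots> = (x \<otimes> a) \<otimes> b" using ax[OF x] by simp
    also have "\<dots> = x \<otimes> (a \<otimes> b)" using ac bc x by (simp add: m_assoc)
    finally show "a \<otimes> b \<otimes> x = x \<otimes> (a \<otimes> b)" .
  qed (use ac bc in auto)
qed

lemma center_normal: "group_center G \<lhd> G"
  unfolding normal_inv_iff
proof (intro conjI ballI)
  show "subgroup (group_center G) G" by (rule center_subgroup)
  fix x h assume x: "x \<in> carrier G" and h: "h \<in> group_center G"
  then have "x \<otimes> h = h \<otimes> x" "h \<in> carrier G" unfolding group_center_def by auto
  then have "x \<otimes> h \<otimes> inv x = h" using x by (simp add: m_assoc)
  then show "x \<otimes> h \<otimes> inv x \<in> group_center G" using h by simp
qed

lemma gcomm_closed[simp]: "x \<in> carrier G \<Longrightarrow> y \<in> carrier G \<Longrightarrow> gcomm G x y \<in> carrier G"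
  unfolding gcomm_def by simp

lemma gcomm_in_center:
  assumes cg: "comm_group (G Mod group_center G)" and x: "x \<in> carrier G" and y: "y \<in> carrier G"
  shows "gcomm G x y \<in> group_center G"
proof -
  let ?Z = "group_center G"
  interpret N: normal ?Z G by (rule center_normal)
  interpret C: comm_group "G Mod ?Z" by (rule cg)
  have cx: "?Z #> x \<in> carrier (G Mod ?Z)" "?Z #> y \<in> carrier (G Mod ?Z)"
    using x y center_sub by (auto simp: FactGroup_def intro: rcosetsI)
  have "(?Z #> x) <#> (?Z #> y) = (?Z #> y) <#> (?Z #> x)"
    using C.m_comm[OF cx] by (simp add: FactGroup_def)
  then have "?Z #> (x \<otimes> y) = ?Z #> (y \<otimes> x)" using x y by (simp add: N.rcos_sum)
  then have "x \<otimes> y \<in> ?Z #> (y \<otimes> x)" using x y center_subgroup rcos_self by (metis m_closed)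
  then obtain h where h: "h \<in> ?Z" "x \<otimes> y = h \<otimes> (y \<otimes> x)" unfolding r_coset_def by auto
  have hc: "h \<in> carrier G" using h center_sub by auto
  have "gcomm G x y = x \<otimes> y \<otimes> inv (y \<otimes> x)" unfolding gcomm_def using x y
    by (simp add: inv_mult_group m_assoc)
  also have "\<dots> = h" using h hc x y by (simp add: m_assoc)
  finally show ?thesis using h by simp
qed

end

locale cgrp = group G for G (structure) +
  assumes cc: "\<And>x y g. x \<in> carrier G \<Longrightarrow> y \<in> carrier G \<Longrightarrow> g \<in> carrier G \<Longrightarrow>
      gcomm G x y \<otimes> g = g \<otimes> gcomm G x y"
begin

lemma comm_eq: "x \<in> carrier G \<Longrightarrow> y \<in> carrier G \<Longrightarrow> gcomm G x y \<otimes> (y \<otimes> x) = x \<otimes> y"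
  unfolding gcomm_def by (simp add: m_assoc)

lemma gcomm_one_iff: "x \<in> carrier G \<Longrightarrow> y \<in> carrier G \<Longrightarrow> gcomm G x y = \<one> \<longleftrightarrow> x \<otimes> y = y \<otimes> x"
  by (metis comm_eq gcomm_closed l_one m_closed r_cancel_one)

lemma gcomm_mult_left:
  assumes x: "x \<in> carrier G" and y: "y \<in> carrier G" and w: "w \<in> carrier G"
  shows "gcomm G (x \<otimes> y) w = gcomm G x w \<otimes> gcomm G y w"
proof -
  let ?c = "gcomm G y w"
  have c: "?c \<in> carrier G" using y w by simp
  have 1: "y \<otimes> w \<otimes> inv y = ?c \<otimes> w" unfolding gcomm_def using y w by (simp add: m_assoc)
  have "gcomm G (x \<otimes> y) w = x \<otimes> (y \<otimes> w \<otimes> inv y) \<otimes> inv x \<otimes> inv w"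
    unfolding gcomm_def using x y w by (simp add: m_assoc inv_mult_group)
  also have "\<dots> = x \<otimes> (?c \<otimes> w) \<otimes> inv x \<otimes> inv w" by (simp add: 1)
  also have "\<dots> = (x \<otimes> ?c) \<otimes> (w \<otimes> inv x \<otimes> inv w)" using x w c by (simp add: m_assoc)
  also have "\<dots> = (?c \<otimes> x) \<otimes> (w \<otimes> inv x \<otimes> inv w)" using cc[OF y w x] by simp
  also have "\<dots> = ?c \<otimes> gcomm G x w" using x w c by (simp add: gcomm_def[of G x w] m_assoc)
  also have "\<dots> = gcomm G x w \<otimes> ?c" using cc[OF y w, of "gcomm G x w"] x w by simp
  finally show ?thesis .
qed

lemma gcomm_swap: "x \<in> carrier G \<Longrightarrow> y \<in> carrier G \<Longrightarrow> gcomm G y x = inv (gcomm G x y)"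
  unfolding gcomm_def by (simp add: inv_mult_group m_assoc)

lemma gcomm_mult_right:
  assumes x: "x \<in> carrier G" and y: "y \<in> carrier G" and w: "w \<in> carrier G"
  shows "gcomm G w (x \<otimes> y) = gcomm G w x \<otimes> gcomm G w y"
proof -
  have "gcomm G w (x \<otimes> y) = inv (gcomm G (x \<otimes> y) w)" using x y w by (simp add: gcomm_swap[of "x \<otimes> y" w])
  also have "\<dots> = inv (gcomm G y w) \<otimes> inv (gcomm G x w)" using x y w by (simp add: gcomm_mult_left inv_mult_group)
  also have "\<dots> = gcomm G w y \<otimes> gcomm G w x" using x y w by (simp add: gcomm_swap[of y w] gcomm_swap[of x w])
  also have "\<dots> = gcomm G w x \<otimes> gcomm G w y" using cc[of w y "gcomm G w x"] x y w by simp
  finally show ?thesis .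
qed

lemma gcomm_one_left[simp]: "w \<in> carrier G \<Longrightarrow> gcomm G \<one> w = \<one>"
  unfolding gcomm_def by simp
lemma gcomm_one_right[simp]: "w \<in> carrier G \<Longrightarrow> gcomm G w \<one> = \<one>"
  unfolding gcomm_def by simp

lemma gcomm_inv_left:
  assumes x: "x \<in> carrier G" and w: "w \<in> carrier G"
  shows "gcomm G (inv x) w = inv (gcomm G x w)"
proof -
  have "gcomm G (inv x) w \<otimes> gcomm G x w = \<one>"
    using gcomm_mult_left[of "inv x" x w] x w by simp
  then show ?thesis using x w by (simp add: inv_char group.inv_equality)
qed

lemma gcomm_inv_right:
  assumes x: "x \<in> carrier G" and w: "w \<in> carrier G"
  shows "gcomm G w (inv x) = inv (gcomm G w x)"
proof -
  have "gcomm G w (inv x) = inv (gcomm G (inv x) w)" using x w by (simp add: gcomm_swap[of "inv x" w])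
  also have "\<dots> = gcomm G x w" using x w by (simp add: gcomm_inv_left)
  also have "\<dots> = inv (gcomm G w x)" using x w by (simp add: gcomm_swap[of x w])
  finally show ?thesis .
qed

lemma gcomm_pow_left:
  assumes x: "x \<in> carrier G" and w: "w \<in> carrier G"
  shows "gcomm G (x [^] (n::nat)) w = gcomm G x w [^] n"
proof (induction n)
  case (Suc n)
  then show ?case using x w by (simp add: gcomm_mult_left)
qed (use w in simp)

lemma gcomm_pow_right:
  assumes x: "x \<in> carrier G" and w: "w \<in> carrier G"
  shows "gcomm G w (x [^] (n::nat)) = gcomm G w x [^] n"
proof (induction n)
  case (Suc n)
  then show ?case using x w by (simp add: gcomm_mult_right)
qed (use w in simp)

lemma gcomm_self[simp]: "x \<in> carrier G \<Longrightarrow> gcomm G x x = \<one>"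
  unfolding gcomm_def by (simp add: m_assoc)

end


context group begin

lemma subgroup_nat_pow_closed: "subgroup H G \<Longrightarrow> h \<in> H \<Longrightarrow> h [^] (n::nat) \<in> H"
  by (induction n) (auto simp: subgroup.one_closed subgroup.m_closed)

definition cent :: "'a set \<Rightarrow> 'a set" where
  "cent S = {g \<in> carrier G. \<forall>a\<in>S. g \<otimes> a = a \<otimes> g}"

lemma cent_subgroup: assumes "S \<subseteq> carrier G" shows "subgroup (cent S) G"
proof (rule subgroupI)
  show "cent S \<subseteq> carrier G" unfolding cent_def by auto
  show "cent S \<noteq> {}" unfolding cent_def using assms by (auto intro!: exI[of _ \<one>])
next
  fix g assume "g \<in> cent S"
  then have gc: "g \<in> carrier G" and gx: "\<And>x. x \<in> S \<Longrightarrow> g \<otimes> x = x \<otimes> g"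
    unfolding cent_def by auto
  show "inv g \<in> cent S" unfolding cent_def
  proof (intro CollectI conjI ballI)
    fix x assume xS: "x \<in> S" then have x: "x \<in> carrier G" using assms by auto
    have "inv g \<otimes> x = inv g \<otimes> x \<otimes> g \<otimes> inv g" using gc x by (simp add: m_assoc)
    also have "\<dots> = inv g \<otimes> (x \<otimes> g) \<otimes> inv g" using gc x by (simp add: m_assoc)
    also have "\<dots> = inv g \<otimes> (g \<otimes> x) \<otimes> inv g" using gx[OF xS] by simp
    also have "\<dots> = x \<otimes> inv g" using gc x by (simp add: m_assoc)
    finally show "inv g \<otimes> x = x \<otimes> inv g" .
  qed (use gc in auto)
next
  fix a b assume "a \<in> cent S" and "b \<in> cent S"
  then have ac: "a \<in> carrier G" and ax: "\<And>x. x \<in> S \<Longrightarrow> a \<otimes> x = x \<otimes> a"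
    and bc: "b \<in> carrier G" and bx: "\<And>x. x \<in> S \<Longrightarrow> b \<otimes> x = x \<otimes> b"
    unfolding cent_def by auto
  show "a \<otimes> b \<in> cent S" unfolding cent_def
  proof (intro CollectI conjI ballI)
    fix x assume xS: "x \<in> S" then have x: "x \<in> carrier G" using assms by auto
    have "a \<otimes> b \<otimes> x = a \<otimes> (b \<otimes> x)" using ac bc x by (simp add: m_assoc)
    also have "\<dots> = a \<otimes> (x \<otimes> b)" using bx[OF xS] by simp
    also have "\<dots> = (a \<otimes> x) \<otimes> b" using ac bc x by (simp add: m_assoc)
    also have "\<dots> = (x \<otimes> a) \<otimes> b" using ax[OF xS] by simp
    also have "\<dots> = x \<otimes> (a \<otimes> b)" using ac bc x by (simp add: m_assoc)
    finally show "a \<otimes> b \<otimes> x = x \<otimes> (a \<otimes> b)" .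
  qed (use ac bc in auto)
qed

lemma cent_generate:
  assumes S: "S \<subseteq> carrier G" and x: "x \<in> carrier G" and xS: "\<And>a. a \<in> S \<Longrightarrow> x \<otimes> a = a \<otimes> x"
    and h: "h \<in> generate G S"
  shows "x \<otimes> h = h \<otimes> x"
proof -
  have "S \<subseteq> cent {x}" unfolding cent_def using S xS by auto
  then have "generate G S \<subseteq> cent {x}"
    using generate_subgroup_incl cent_subgroup x by auto
  then show ?thesis using h unfolding cent_def by auto
qed

end

lemma mod_compl_dvd: assumes p: "(p::nat) > 0" shows "p dvd ((p - t mod p) mod p + t)"
proof (cases "t mod p = 0")
  case True then show ?thesis by (simp add: mod_eq_0_iff_dvd)
next
  case False
  have r: "t mod p < p" using p by simp
  then have 1: "(p - t mod p) mod p = p - t mod p" using False by simp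
  have e: "p * (t div p) + t mod p = t" by simp
  have "p - t mod p + t = p + p * (t div p)" using r e by linarith
  also have "\<dots> = p * (1 + t div p)" by (simp add: algebra_simps)
  finally show ?thesis using 1 by simp
qed

locale esg = cgrp G for G (structure) + fixes z :: 'a and p :: nat
  assumes fin: "finite (carrier G)"
    and pprime: "Factorial_Ring.prime p"
    and zc: "z \<in> group_center G"
    and ordz: "ord z = p"
    and cardZ: "card (group_center G) = p"
    and comm_z: "\<And>x y. x \<in> carrier G \<Longrightarrow> y \<in> carrier G \<Longrightarrow> \<exists>k::nat. gcomm G x y = z [^] k"
begin

lemma z_carrier[simp]: "z \<in> carrier G" using zc center_sub by auto

lemma p_pos: "p > 0" using pprime prime_gt_0_nat by blast

lemma z_pow_one: "z [^] (n::nat) = \<one> \<longleftrightarrow> p dvd n"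
  using pow_eq_id[of z n] ordz by simp

lemma z_pow_inj: "z [^] (i::nat) = z [^] (j::nat) \<Longrightarrow> i < p \<Longrightarrow> j < p \<Longrightarrow> i = j"
  using ord_inj[of z] ordz unfolding inj_on_def by auto

lemma z_pow_mod: "z [^] (n::nat) = z [^] (n mod p)"
proof -
  have "z [^] n = z [^] (p * (n div p) + n mod p)" by simp
  also have "\<dots> = (z [^] p) [^] (n div p) \<otimes> z [^] (n mod p)"
    by (simp add: nat_pow_mult nat_pow_pow)
  also have "\<dots> = z [^] (n mod p)" using z_pow_one[of p] by simp
  finally show ?thesis .
qed

lemma center_comm: "c \<in> group_center G \<Longrightarrow> g \<in> carrier G \<Longrightarrow> c \<otimes> g = g \<otimes> c"
  unfolding group_center_def by auto

lemma gcomm_z_right[simp]: "x \<in> carrier G \<Longrightarrow> gcomm G x z = \<one>"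
  using gcomm_one_iff[of x z] center_comm[OF zc, of x] by simp
lemma gcomm_z_left[simp]: "x \<in> carrier G \<Longrightarrow> gcomm G z x = \<one>"
  using gcomm_one_iff[of z x] center_comm[OF zc, of x] by simp

lemma z_pow_comm: "g \<in> carrier G \<Longrightarrow> z [^] (n::nat) \<otimes> g = g \<otimes> z [^] n"
  using subgroup_nat_pow_closed[OF center_subgroup zc] center_comm by blast

lemma gcomm_xy_left:
  assumes x: "x \<in> carrier G" and y: "y \<in> carrier G" and g: "g \<in> carrier G" and xy: "gcomm G x y = z"
  shows "gcomm G (x [^] (i::nat) \<otimes> y [^] (j::nat) \<otimes> g) y = z [^] i \<otimes> gcomm G g y"
  using x y g xy by (simp add: gcomm_mult_left gcomm_pow_left)

lemma gcomm_xy_right: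
  assumes x: "x \<in> carrier G" and y: "y \<in> carrier G" and g: "g \<in> carrier G" and xy: "gcomm G x y = z"
  shows "gcomm G x (x [^] (i::nat) \<otimes> y [^] (j::nat) \<otimes> g) = z [^] j \<otimes> gcomm G x g"
  using x y g xy by (simp add: gcomm_mult_right gcomm_pow_right)


lemma cent_carrier: "cent S \<subseteq> carrier G" unfolding cent_def by auto

lemma split_step:
  assumes S: "S \<subseteq> carrier G" and x: "x \<in> cent S" and y: "y \<in> cent S" and xy: "gcomm G x y = z"
  shows "card (cent S) = p * p * card (cent (insert x (insert y S)))"
    and "\<forall>g\<in>cent S. \<exists>h\<in>generate G {x,y}. \<exists>c\<in>cent (insert x (insert y S)). g = h \<otimes> c"
proof -
  let ?C = "cent S" and ?C' = "cent (insert x (insert y S))"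
  define f where "f = (\<lambda>(i::nat,j::nat,c). inv (x [^] i \<otimes> y [^] j) \<otimes> c)"
  let ?D = "{..<p} \<times> {..<p} \<times> ?C'"
  have xc: "x \<in> carrier G" and yc: "y \<in> carrier G" using x y cent_carrier by auto
  have sub: "?C' \<subseteq> ?C" unfolding cent_def by auto
  have Csg: "subgroup ?C G" using cent_subgroup[OF S] .
  have xyC: "x [^] (i::nat) \<otimes> y [^] (j::nat) \<in> ?C" for i j
    using Csg x y by (simp add: subgroup.m_closed subgroup_nat_pow_closed)
  have cC'I: "c \<in> ?C'" if "c \<in> ?C" "c \<otimes> x = x \<otimes> c" "c \<otimes> y = y \<otimes> c" for c
    using that unfolding cent_def by auto
  have dec: "\<exists>i<p. \<exists>j<p. \<exists>c\<in>?C'. g = inv (x [^] i \<otimes> y [^] j) \<otimes> c" if g: "g \<in> ?C" for g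
  proof -
    have gc: "g \<in> carrier G" using g cent_carrier by auto
    obtain t where t: "gcomm G g y = z [^] (t::nat)" using comm_z[OF gc yc] by auto
    obtain s where s: "gcomm G x g = z [^] (s::nat)" using comm_z[OF xc gc] by auto
    define i where "i = (p - t mod p) mod p"
    define j where "j = (p - s mod p) mod p"
    define c where "c = x [^] i \<otimes> y [^] j \<otimes> g"
    have cC: "c \<in> ?C" unfolding c_def using xyC g Csg by (simp add: subgroup.m_closed)
    have cc: "c \<in> carrier G" using cC cent_carrier by auto
    have "gcomm G c y = z [^] i \<otimes> z [^] t" unfolding c_def using gcomm_xy_left[OF xc yc gc xy] t by simp
    also have "\<dots> = z [^] (i + t)" by (simp add: nat_pow_mult)
    also have "\<dots> = \<one>" unfolding z_pow_one i_def using mod_compl_dvd[OF p_pos] .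
    finally have 1: "c \<otimes> y = y \<otimes> c" using gcomm_one_iff[OF cc yc] by simp
    have "gcomm G x c = z [^] j \<otimes> z [^] s" unfolding c_def using gcomm_xy_right[OF xc yc gc xy] s by simp
    also have "\<dots> = z [^] (j + s)" by (simp add: nat_pow_mult)
    also have "\<dots> = \<one>" unfolding z_pow_one j_def using mod_compl_dvd[OF p_pos] .
    finally have 2: "c \<otimes> x = x \<otimes> c" using gcomm_one_iff[OF xc cc] by simp
    have cC': "c \<in> ?C'" using cC'I[OF cC 2 1] .
    have "inv (x [^] i \<otimes> y [^] j) \<otimes> c = g" unfolding c_def using xc yc gc
      by (intro inv_cancel_l1) auto
    moreover have "i < p" "j < p" unfolding i_def j_def using p_pos by auto
    ultimately show ?thesis using cC' by metis
  qed
  have inj: "inj_on f ?D"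
  proof (rule inj_onI)
    fix a a' assume a: "a \<in> ?D" and a': "a' \<in> ?D" and eq: "f a = f a'"
    obtain i j c where aa: "a = (i,j,c)" by (cases a) auto
    obtain i' j' c' where aa': "a' = (i',j',c')" by (cases a') auto
    have i: "i < p" "j < p" "c \<in> ?C'" using a aa by auto
    have i': "i' < p" "j' < p" "c' \<in> ?C'" using a' aa' by auto
    have cc: "c \<in> carrier G" "c' \<in> carrier G" using i i' sub cent_carrier by auto
    define g where "g = f a"
    have gc: "g \<in> carrier G" unfolding g_def aa f_def using xc yc cc by simp
    have g1: "g = inv (x [^] i \<otimes> y [^] j) \<otimes> c" unfolding g_def aa f_def by simp
    have g2: "g = inv (x [^] i' \<otimes> y [^] j') \<otimes> c'" using eq unfolding g_def aa' f_def by simp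
    have c1: "c = x [^] i \<otimes> y [^] j \<otimes> g" unfolding g1 using xc yc cc
      by (intro inv_cancel_l2[symmetric]) auto
    have c2: "c' = x [^] i' \<otimes> y [^] j' \<otimes> g" unfolding g2 using xc yc cc
      by (intro inv_cancel_l2[symmetric]) auto
    have cy: "gcomm G c y = \<one>" "gcomm G c' y = \<one>" "gcomm G x c = \<one>" "gcomm G x c' = \<one>"
      using i(3) i'(3) cc xc yc gcomm_one_iff unfolding cent_def by auto
    have "z [^] i \<otimes> gcomm G g y = z [^] i' \<otimes> gcomm G g y"
      using cy(1,2) gcomm_xy_left[OF xc yc gc xy, of i j] gcomm_xy_left[OF xc yc gc xy, of i' j'] c1 c2 by simp
    then have "z [^] i = z [^] i'" using gc yc by simp
    then have ii: "i = i'" using z_pow_inj i i' by blast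
    have "z [^] j \<otimes> gcomm G x g = z [^] j' \<otimes> gcomm G x g"
      using cy(3,4) gcomm_xy_right[OF xc yc gc xy, of i j] gcomm_xy_right[OF xc yc gc xy, of i' j'] c1 c2 by simp
    then have "z [^] j = z [^] j'" using gc xc by simp
    then have jj: "j = j'" using z_pow_inj i i' by blast
    show "a = a'" using aa aa' ii jj c1 c2 by simp
  qed
  have img: "f ` ?D = ?C"
  proof
    show "f ` ?D \<subseteq> ?C"
    proof
      fix g assume "g \<in> f ` ?D"
      then obtain a where a: "a \<in> ?D" "g = f a" by auto
      obtain i j c where aa: "a = (i,j,c)" by (cases a) auto
      have "c \<in> ?C'" "g = inv (x [^] i \<otimes> y [^] j) \<otimes> c" using a aa unfolding f_def by auto
      then show "g \<in> ?C" using sub xyC Csg by (auto simp: subgroup.m_closed subgroup.m_inv_closed)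
    qed
    show "?C \<subseteq> f ` ?D"
    proof
      fix g assume "g \<in> ?C"
      then obtain i j c where "i < p" "j < p" "c \<in> ?C'" "g = inv (x [^] i \<otimes> y [^] j) \<otimes> c"
        using dec by blast
      then show "g \<in> f ` ?D" unfolding f_def by (auto intro!: image_eqI[of _ _ "(i,j,c)"])
    qed
  qed
  have "card ?C = card ?D" using card_image[OF inj] img by simp
  also have "\<dots> = p * p * card ?C'" by (simp add: card_cartesian_product)
  finally show "card ?C = p * p * card ?C'" .
  have gsg: "subgroup (generate G {x,y}) G" using generate_is_subgroup xc yc by auto
  have xg: "x \<in> generate G {x,y}" "y \<in> generate G {x,y}" by (auto intro: generate.incl)
  show "\<forall>g\<in>?C. \<exists>h\<in>generate G {x,y}. \<exists>c\<in>?C'. g = h \<otimes> c"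
  proof
    fix g assume gC: "g \<in> ?C"
    obtain i j :: nat and c where "c \<in> ?C'" "g = inv (x [^] i \<otimes> y [^] j) \<otimes> c"
      using dec[OF gC] by blast
    moreover have "inv (x [^] i \<otimes> y [^] j) \<in> generate G {x,y}"
      using gsg xg by (simp add: subgroup.m_closed subgroup.m_inv_closed subgroup_nat_pow_closed)
    ultimately show "\<exists>h\<in>generate G {x,y}. \<exists>c\<in>?C'. g = h \<otimes> c" by blast
  qed
qed


definition good :: "nat \<Rightarrow> (nat \<Rightarrow> 'a) \<Rightarrow> (nat \<Rightarrow> 'a) \<Rightarrow> bool" where
  "good k A B \<longleftrightarrow> (\<forall>i\<in>{1..k}. A i \<in> carrier G \<and> B i \<in> carrier G)
    \<and> (\<forall>i\<in>{1..k}. \<forall>j\<in>{1..k}. gcomm G (A i) (B j) = (if i = j then z else \<one>)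
          \<and> gcomm G (A i) (A j) = \<one> \<and> gcomm G (B i) (B j) = \<one>)
    \<and> card (cent (A ` {1..k} \<union> B ` {1..k})) * p ^ (2 * k) = order G
    \<and> (\<forall>g\<in>carrier G. \<exists>h\<in>generate G (A ` {1..k} \<union> B ` {1..k}).
          \<exists>c\<in>cent (A ` {1..k} \<union> B ` {1..k}). g = h \<otimes> c)"

lemma gcomm_comm_one: "a \<in> carrier G \<Longrightarrow> x \<in> carrier G \<Longrightarrow> x \<otimes> a = a \<otimes> x \<Longrightarrow>
   gcomm G x a = \<one> \<and> gcomm G a x = \<one>"
  using gcomm_one_iff by metis

lemma build:
  assumes ordG: "order G = p ^ (2 * N + 1)"
  shows "k \<le> N \<Longrightarrow> \<exists>A B. good k A B"
proof (induction k)
  case 0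
  have e: "{1..0::nat} = {}" by simp
  have dec0: "\<forall>g\<in>carrier G. \<exists>h\<in>generate G ({}::'a set). \<exists>c\<in>carrier G. g = h \<otimes> c"
    using generate.one[of G "{}"] by (metis l_one)
  have c0: "cent {} = carrier G" unfolding cent_def by auto
  have "good 0 (\<lambda>_. \<one>) (\<lambda>_. \<one>)" unfolding good_def
    using dec0 c0 by (simp add: order_def)
  then show ?case by blast
next
  case (Suc k)
  then obtain A B where gd: "good k A B" by auto
  define S where "S = A ` {1..k} \<union> B ` {1..k}"
  have Ac: "\<And>i. i \<in> {1..k} \<Longrightarrow> A i \<in> carrier G" and Bc: "\<And>i. i \<in> {1..k} \<Longrightarrow> B i \<in> carrier G"
    using gd unfolding good_def by auto
  have S: "S \<subseteq> carrier G" unfolding S_def using Ac Bc by auto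
  have rel: "\<And>i j. i \<in> {1..k} \<Longrightarrow> j \<in> {1..k} \<Longrightarrow> gcomm G (A i) (B j) = (if i = j then z else \<one>)
          \<and> gcomm G (A i) (A j) = \<one> \<and> gcomm G (B i) (B j) = \<one>"
    using gd unfolding good_def by auto
  have cardC: "card (cent S) * p ^ (2 * k) = order G" using gd unfolding good_def S_def by auto
  have decC: "\<forall>g\<in>carrier G. \<exists>h\<in>generate G S. \<exists>c\<in>cent S. g = h \<otimes> c"
    using gd unfolding good_def S_def by auto
  have p1: "p > 1" using pprime prime_gt_1_nat by blast
  have "\<not> cent S \<subseteq> group_center G"
  proof
    assume "cent S \<subseteq> group_center G"
    then have "card (cent S) \<le> p" using cardZ card_mono fin center_sub finite_subset by metis
    then have "order G \<le> p * p ^ (2 * k)" using cardC by (metis mult_le_mono1)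
    also have "\<dots> = p ^ (2 * k + 1)" by simp
    also have "\<dots> < p ^ (2 * N + 1)" using Suc.prems p1 by simp
    finally show False using ordG by simp
  qed
  then obtain x where xC: "x \<in> cent S" and xZ: "x \<notin> group_center G" by auto
  have xc: "x \<in> carrier G" using xC cent_carrier by auto
  obtain g where g: "g \<in> carrier G" "x \<otimes> g \<noteq> g \<otimes> x" using xZ xc unfolding group_center_def by auto
  obtain h c where h: "h \<in> generate G S" and cC: "c \<in> cent S" and ghc: "g = h \<otimes> c"
    using decC g(1) by blast
  have cc: "c \<in> carrier G" using cC cent_carrier by auto
  have hc: "h \<in> carrier G" using h generate_incl[OF S] by auto
  have xh: "x \<otimes> h = h \<otimes> x"
    using cent_generate[OF S xc _ h] xC unfolding cent_def by auto
  have "x \<otimes> c \<noteq> c \<otimes> x"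
  proof
    assume xc': "x \<otimes> c = c \<otimes> x"
    have "x \<otimes> g = (x \<otimes> h) \<otimes> c" using ghc xc hc cc by (simp add: m_assoc)
    also have "\<dots> = h \<otimes> (x \<otimes> c)" using xh xc hc cc by (simp add: m_assoc)
    also have "\<dots> = g \<otimes> x" using xc' ghc xc hc cc by (simp add: m_assoc)
    finally show False using g(2) by simp
  qed
  then have ne: "gcomm G x c \<noteq> \<one>" using gcomm_one_iff[OF xc cc] by simp
  obtain s where s: "gcomm G x c = z [^] (s::nat)" using comm_z[OF xc cc] by auto
  have nd: "\<not> p dvd s" using ne s z_pow_one by simp
  then have s0: "s \<noteq> 0" by (metis dvd_0_right)
  have "coprime p s" using prime_imp_coprime[OF pprime nd] .
  then have gcd1: "gcd s p = 1" by (simp add: coprime_iff_gcd_eq_1 gcd.commute)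
  obtain u v where uv: "s * u = p * v + gcd s p" using bezout_nat[OF s0, of p] by blast
  define y where "y = c [^] u"
  have yC: "y \<in> cent S" unfolding y_def using subgroup_nat_pow_closed[OF cent_subgroup[OF S] cC] .
  have yc: "y \<in> carrier G" using yC cent_carrier by auto
  have xy: "gcomm G x y = z"
  proof -
    have "gcomm G x y = (z [^] s) [^] u" unfolding y_def using gcomm_pow_right[OF cc xc] s by simp
    also have "\<dots> = z [^] (p * v + 1)" using uv gcd1 by (simp add: nat_pow_pow)
    also have "\<dots> = (z [^] p) [^] v \<otimes> z" by (simp add: nat_pow_mult nat_pow_pow)
    also have "\<dots> = z" using z_pow_one[of p] by simp
    finally show ?thesis .
  qed
  note sp = split_step[OF S xC yC xy]
  define A' where "A' = A(Suc k := x)"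
  define B' where "B' = B(Suc k := y)"
  have nk: "Suc k \<notin> {1..k}" by simp
  have ee: "{1..Suc k} = insert (Suc k) {1..k}" by (rule atLeastAtMostSuc_conv) simp
  have im: "A' ` {1..Suc k} \<union> B' ` {1..Suc k} = insert x (insert y S)"
    unfolding A'_def B'_def S_def ee using nk
    by (auto simp: fun_upd_image)
  have xS: "\<And>a. a \<in> S \<Longrightarrow> gcomm G x a = \<one> \<and> gcomm G a x = \<one>"
    using xC S gcomm_comm_one[OF _ xc] unfolding cent_def by blast
  have yS: "\<And>a. a \<in> S \<Longrightarrow> gcomm G y a = \<one> \<and> gcomm G a y = \<one>"
    using yC S gcomm_comm_one[OF _ yc] unfolding cent_def by blast
  have AS: "\<And>i. i \<in> {1..k} \<Longrightarrow> A i \<in> S" and BS: "\<And>i. i \<in> {1..k} \<Longrightarrow> B i \<in> S"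
    unfolding S_def by auto
  have "good (Suc k) A' B'" unfolding good_def
  proof (intro conjI ballI)
    fix i assume i: "i \<in> {1..Suc k}"
    then have "i \<in> {1..k} \<or> i = Suc k" by auto
    then show "A' i \<in> carrier G" "B' i \<in> carrier G"
      unfolding A'_def B'_def using Ac Bc xc yc by auto
  next
    fix i j assume i: "i \<in> {1..Suc k}" and j: "j \<in> {1..Suc k}"
    have i': "i \<in> {1..k} \<or> i = Suc k" and j': "j \<in> {1..k} \<or> j = Suc k" using i j by auto
    have nik: "i \<in> {1..k} \<Longrightarrow> i \<noteq> Suc k" for i by auto
    show "gcomm G (A' i) (B' j) = (if i = j then z else \<one>)"
      using i' j' unfolding A'_def B'_def
      by (auto simp: rel xy xS[OF BS] yS[OF AS] dest: nik)
    show "gcomm G (A' i) (A' j) = \<one>"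
      using i' j' xc unfolding A'_def
      by (auto simp: rel xS[OF AS] dest: nik)
    show "gcomm G (B' i) (B' j) = \<one>"
      using i' j' yc unfolding B'_def
      by (auto simp: rel yS[OF BS] dest: nik)
  next
    have "card (cent (insert x (insert y S))) * p ^ (2 * Suc k)
        = (p * p * card (cent (insert x (insert y S)))) * p ^ (2 * k)"
      by (simp add: power_add mult.commute mult.left_commute)
    also have "\<dots> = order G" using sp(1) cardC by simp
    finally show "card (cent (A' ` {1..Suc k} \<union> B' ` {1..Suc k})) * p ^ (2 * Suc k) = order G"
      unfolding im .
  next
    fix g assume g: "g \<in> carrier G"
    obtain h c where h: "h \<in> generate G S" and cC: "c \<in> cent S" and ghc: "g = h \<otimes> c"
      using bspec[OF decC g] by blast
    obtain h' c' where h': "h' \<in> generate G {x,y}" and cC': "c' \<in> cent (insert x (insert y S))"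
       and c: "c = h' \<otimes> c'"
      using bspec[OF sp(2) cC] by blast
    have S': "insert x (insert y S) \<subseteq> carrier G" using S xc yc by auto
    have sg: "subgroup (generate G (insert x (insert y S))) G" using generate_is_subgroup[OF S'] .
    have "generate G S \<subseteq> generate G (insert x (insert y S))" by (rule mono_generate) auto
    then have hS: "h \<in> generate G (insert x (insert y S))" using h by auto
    have "generate G {x,y} \<subseteq> generate G (insert x (insert y S))" by (rule mono_generate) auto
    then have hS': "h' \<in> generate G (insert x (insert y S))" using h' by auto
    have hh: "h \<otimes> h' \<in> generate G (insert x (insert y S))" using subgroup.m_closed[OF sg hS hS'] .
    have hc: "h \<in> carrier G" "h' \<in> carrier G" using hS hS' generate_incl[OF S'] by auto
    have c'c: "c' \<in> carrier G" using cC' cent_carrier by auto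
    have "g = (h \<otimes> h') \<otimes> c'" unfolding ghc c using hc c'c by (simp add: m_assoc)
    then show "\<exists>h\<in>generate G (A' ` {1..Suc k} \<union> B' ` {1..Suc k}).
          \<exists>c\<in>cent (A' ` {1..Suc k} \<union> B' ` {1..Suc k}). g = h \<otimes> c"
      unfolding im using hh cC' by blast
  qed
  then show ?case by blast
qed


lemma gcomm_center: "x \<in> carrier G \<Longrightarrow> y \<in> carrier G \<Longrightarrow> gcomm G x y \<in> group_center G"
  using comm_z subgroup_nat_pow_closed[OF center_subgroup zc] by metis

lemma zcomm: "g \<in> carrier G \<Longrightarrow> z \<otimes> g = g \<otimes> z"
  using center_comm[OF zc] by simp

lemma h1: "g \<in> carrier G \<Longrightarrow> inv g \<otimes> z \<otimes> g = z"
  by (simp add: m_assoc zcomm[symmetric])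
lemma h2: "u \<in> carrier G \<Longrightarrow> g \<in> carrier G \<Longrightarrow> u \<otimes> z \<otimes> g \<otimes> inv z = u \<otimes> g"
proof -
  assume u: "u \<in> carrier G" and g: "g \<in> carrier G"
  have "u \<otimes> z \<otimes> g \<otimes> inv z = u \<otimes> (z \<otimes> g) \<otimes> inv z" using u g by (simp add: m_assoc)
  also have "\<dots> = u \<otimes> (g \<otimes> z) \<otimes> inv z" using g by (simp add: zcomm)
  also have "\<dots> = u \<otimes> g" using u g by (simp add: m_assoc)
  finally show ?thesis .
qed
lemma h5: "u \<in> carrier G \<Longrightarrow> g \<in> carrier G \<Longrightarrow> inv z \<otimes> u \<otimes> g \<otimes> z = u \<otimes> g"
proof -
  assume u: "u \<in> carrier G" and g: "g \<in> carrier G"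
  have "inv z \<otimes> u \<otimes> g \<otimes> z = inv z \<otimes> ((u \<otimes> g) \<otimes> z)" using u g by (simp add: m_assoc)
  also have "\<dots> = inv z \<otimes> (z \<otimes> (u \<otimes> g))" using u g by (simp add: zcomm)
  also have "\<dots> = u \<otimes> g" using u g by simp
  finally show ?thesis .
qed
lemma h4: "u \<in> carrier G \<Longrightarrow> g \<in> carrier G \<Longrightarrow> u \<otimes> inv g \<otimes> g = u"
  by (simp add: m_assoc)
lemma h4': "u \<in> carrier G \<Longrightarrow> g \<in> carrier G \<Longrightarrow> u \<otimes> g \<otimes> inv g = u"
  by (simp add: m_assoc)

lemma zc1: "u \<in> carrier G \<Longrightarrow> v \<in> carrier G \<Longrightarrow> inv z \<otimes> u \<otimes> inv v \<otimes> z \<otimes> v \<otimes> inv u = \<one>"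
  by (simp add: h5 h4)
lemma zc2: "w \<in> carrier G \<Longrightarrow> u \<in> carrier G \<Longrightarrow>
  inv w \<otimes> z \<otimes> w \<otimes> inv z \<otimes> u \<otimes> z \<otimes> inv w \<otimes> inv z \<otimes> w \<otimes> inv u = \<one>"
  by (simp add: h1 h2 h4)

lemma gprod_closed: "set xs \<subseteq> carrier G \<Longrightarrow> gprod G xs \<in> carrier G"
  by (induction xs) (auto simp: gprod_def)

lemma gprod_append: "set xs \<subseteq> carrier G \<Longrightarrow> set ys \<subseteq> carrier G \<Longrightarrow>
    gprod G (xs @ ys) = gprod G xs \<otimes> gprod G ys"
proof (induction xs)
  case Nil
  have "gprod G [] = \<one>" by (simp add: gprod_def)
  then show ?case using Nil gprod_closed by simp
next
  case (Cons a xs) then show ?case by (simp add: gprod_def m_assoc)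
qed


lemma gprod_center: "(\<And>j. j \<in> set L \<Longrightarrow> c j \<in> group_center G) \<Longrightarrow> gprod G (map c L) \<in> group_center G"
proof (induction L)
  case Nil then show ?case using subgroup.one_closed[OF center_subgroup] by (simp add: gprod_def)
next
  case (Cons a L)
  then have "gprod G (map c L) \<in> group_center G" "c a \<in> group_center G" by auto
  then show ?case using subgroup.m_closed[OF center_subgroup] by (simp add: gprod_def)
qed

lemma gprod_map_mult:
  assumes "\<And>j. j \<in> set L \<Longrightarrow> c j \<in> group_center G" and "\<And>j. j \<in> set L \<Longrightarrow> u j \<in> carrier G"
  shows "gprod G (map (\<lambda>j. c j \<otimes> u j) L) = gprod G (map c L) \<otimes> gprod G (map u L)"
  using assms
proof (induction L)
  case Nil then show ?case by (simp add: gprod_def)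
next
  case (Cons a L)
  let ?C = "gprod G (map c L)" and ?U = "gprod G (map u L)"
  have C: "?C \<in> group_center G" using Cons.prems by (intro gprod_center) auto
  have Cc: "?C \<in> carrier G" using C center_sub by auto
  have Uc: "?U \<in> carrier G" using Cons.prems by (intro gprod_closed) auto
  have ca: "c a \<in> carrier G" "u a \<in> carrier G" using Cons.prems center_sub by auto
  have IH: "gprod G (map (\<lambda>j. c j \<otimes> u j) L) = ?C \<otimes> ?U" using Cons by auto
  have "gprod G (map (\<lambda>j. c j \<otimes> u j) (a # L)) = c a \<otimes> u a \<otimes> (?C \<otimes> ?U)"
    using IH by (simp add: gprod_def)
  also have "\<dots> = c a \<otimes> (u a \<otimes> ?C) \<otimes> ?U" using ca Cc Uc by (simp add: m_assoc)
  also have "\<dots> = c a \<otimes> (?C \<otimes> u a) \<otimes> ?U" using center_comm[OF C, of "u a"] ca by simp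
  also have "\<dots> = (c a \<otimes> ?C) \<otimes> (u a \<otimes> ?U)" using ca Cc Uc by (simp add: m_assoc)
  also have "\<dots> = gprod G (map c (a # L)) \<otimes> gprod G (map u (a # L))" by (simp add: gprod_def)
  finally show ?case .
qed

lemma gprod_inv_rev:
  assumes "\<And>j. j \<in> set L \<Longrightarrow> t j \<in> carrier G"
  shows "gprod G (map (\<lambda>j. inv (t j)) (rev L)) = inv (gprod G (map t L))"
  using assms
proof (induction L)
  case Nil then show ?case by (simp add: gprod_def)
next
  case (Cons a L)
  have T: "gprod G (map t L) \<in> carrier G" using Cons.prems by (intro gprod_closed) auto
  have ta: "t a \<in> carrier G" using Cons.prems by auto
  have s1: "set (map (\<lambda>j. inv (t j)) (rev L)) \<subseteq> carrier G" using Cons.prems by auto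
  have "gprod G (map (\<lambda>j. inv (t j)) (rev (a # L)))
      = gprod G (map (\<lambda>j. inv (t j)) (rev L)) \<otimes> gprod G [inv (t a)]"
    using gprod_append[OF s1, of "[inv (t a)]"] ta by simp
  also have "\<dots> = inv (gprod G (map t L)) \<otimes> inv (t a)" using Cons ta by (simp add: gprod_def)
  also have "\<dots> = inv (t a \<otimes> gprod G (map t L))" using T ta by (simp add: inv_mult_group)
  also have "\<dots> = inv (gprod G (map t (a # L)))" by (simp add: gprod_def)
  finally show ?case .
qed

lemma gprod_ones: "(\<And>j. j \<in> set L \<Longrightarrow> c j = \<one>) \<Longrightarrow> gprod G (map c L) = \<one>"
  by (induction L) (auto simp: gprod_def)

lemma gprod_single:
  assumes "distinct L" "i \<in> set L" "\<And>j. j \<in> set L \<Longrightarrow> j \<noteq> i \<Longrightarrow> c j = \<one>" "c i \<in> carrier G"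
  shows "gprod G (map c L) = c i"
  using assms
proof (induction L)
  case Nil then show ?case by simp
next
  case (Cons a L)
  show ?case
  proof (cases "a = i")
    case True
    then have "gprod G (map c L) = \<one>" using Cons.prems by (intro gprod_ones) auto
    then show ?thesis using True Cons.prems by (simp add: gprod_def)
  next
    case False
    then have "gprod G (map c L) = c i" using Cons by auto
    moreover have "c a = \<one>" using Cons.prems False by auto
    ultimately show ?thesis using Cons.prems by (simp add: gprod_def)
  qed
qed


lemma ddk:
  fixes b :: nat and A B :: "nat \<Rightarrow> 'a"
  assumes b2: "b \<ge> 2" and z1: "z \<noteq> \<one>"
    and Ac: "\<And>i. 1 \<le> i \<Longrightarrow> i \<le> 2*b \<Longrightarrow> A i \<in> carrier G"
    and Bc: "\<And>i. 1 \<le> i \<Longrightarrow> i \<le> 2*b \<Longrightarrow> B i \<in> carrier G"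
    and rAB: "\<And>i j. 1 \<le> i \<Longrightarrow> i \<le> 2*b \<Longrightarrow> 1 \<le> j \<Longrightarrow> j \<le> 2*b \<Longrightarrow>
       gcomm G (A i) (B j) = (if i = j then z else \<one>)"
    and rAA: "\<And>i j. 1 \<le> i \<Longrightarrow> i \<le> 2*b \<Longrightarrow> 1 \<le> j \<Longrightarrow> j \<le> 2*b \<Longrightarrow>
       gcomm G (A i) (A j) = \<one>"
    and rBB: "\<And>i j. 1 \<le> i \<Longrightarrow> i \<le> 2*b \<Longrightarrow> 1 \<le> j \<Longrightarrow> j \<le> 2*b \<Longrightarrow>
       gcomm G (B i) (B j) = \<one>"
    and gen: "\<forall>g\<in>carrier G. \<exists>h\<in>generate G (A ` {1..2*b} \<union> B ` {1..2*b}). \<exists>c\<in>generate G {z}. g = h \<otimes> c"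
  shows "\<exists>r1 t1 r2 t2. diagonal_double_kodaira G b p r1 t1 r2 t2 z \<and> \<not> ddk_strong G b r1 t1 r2 t2 z"
proof -
  have rBA: "\<And>i j. 1 \<le> i \<Longrightarrow> i \<le> 2*b \<Longrightarrow> 1 \<le> j \<Longrightarrow> j \<le> 2*b \<Longrightarrow>
       gcomm G (B j) (A i) = (if i = j then inv z else \<one>)"
  proof -
    fix i j assume ij: "1 \<le> i" "i \<le> 2*b" "1 \<le> j" "j \<le> 2*b"
    have "gcomm G (B j) (A i) = inv (gcomm G (A i) (B j))" using gcomm_swap[OF Ac[OF ij(1,2)] Bc[OF ij(3,4)]] .
    then show "gcomm G (B j) (A i) = (if i = j then inv z else \<one>)" using rAB[OF ij] by simp
  qed
  define r1 where "r1 = (\<lambda>j. if j = 1 then A 1 \<otimes> inv (B (b+1)) else A j)"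
  define t1 where "t1 = (\<lambda>j. A (b+j))"
  define r2 where "r2 = (\<lambda>j. B (b+j))"
  define t2 where "t2 = (\<lambda>j. if j = 2 then inv (B 2) \<otimes> inv (A (b+2)) else inv (B j))"
  note simps = gcomm_mult_left gcomm_mult_right gcomm_inv_left gcomm_inv_right rAB rBA rAA rBB Ac Bc
  have cr1: "r1 j \<in> carrier G" if "j \<in> {1..b}" for j using that b2 unfolding r1_def by (auto simp: Ac Bc)
  have ct1: "t1 j \<in> carrier G" if "j \<in> {1..b}" for j using that b2 unfolding t1_def by (auto simp: Ac Bc)
  have cr2: "r2 j \<in> carrier G" if "j \<in> {1..b}" for j using that b2 unfolding r2_def by (auto simp: Ac Bc)
  have ct2: "t2 j \<in> carrier G" if "j \<in> {1..b}" for j using that b2 unfolding t2_def by (auto simp: Ac Bc)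
  have V1: "gcomm G (r1 j) (r2 k) = \<one>" if "j \<in> {1..b}" "k \<in> {1..b}" for j k
    using that b2 unfolding r1_def r2_def by (auto simp: simps)
  have V2: "gcomm G (r1 j) (t2 k) = (if j = k then inv z else \<one>)" if "j \<in> {1..b}" "k \<in> {1..b}" for j k
    using that b2 unfolding r1_def t2_def by (auto simp: simps)
  have V3: "gcomm G (t1 j) (r2 k) = (if j = k then z else \<one>)" if "j \<in> {1..b}" "k \<in> {1..b}" for j k
    using that b2 unfolding t1_def r2_def by (auto simp: simps)
  have V4: "gcomm G (t1 j) (t2 k) = \<one>" if "j \<in> {1..b}" "k \<in> {1..b}" for j k
    using that b2 unfolding t1_def t2_def by (auto simp: simps)
  have V5: "gcomm G (inv (r1 j)) (inv (t1 j)) = (if j = 1 then z else \<one>)" if "j \<in> {1..b}" for j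
    using that b2 unfolding r1_def t1_def by (auto simp: simps)
  have V6: "gcomm G (inv (r2 j)) (t2 j) = (if j = 2 then inv z else \<one>)" if "j \<in> {1..b}" for j
    using that b2 unfolding r2_def t2_def by (auto simp: simps)
  have L: "set [1..<b+1] = {1..b}" by auto
  have dL: "distinct (rev [1..<b+1])" by simp
  have S1: "gprod G (map (\<lambda>j. gcomm G (inv (r1 j)) (inv (t1 j)) \<otimes> inv (t1 j)) (rev [1..<b+1]))
       \<otimes> gprod G (map t1 [1..<b+1]) = z"
  proof -
    let ?c = "\<lambda>j. gcomm G (inv (r1 j)) (inv (t1 j))"
    have cZ: "?c j \<in> group_center G" if "1 \<le> j" "j \<le> b" for j
      using that cr1 ct1 by (intro gcomm_center) auto
    have T: "gprod G (map t1 [1..<b+1]) \<in> carrier G" using L ct1 by (intro gprod_closed) auto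
    have "gprod G (map (\<lambda>j. ?c j \<otimes> inv (t1 j)) (rev [1..<b+1]))
        = gprod G (map ?c (rev [1..<b+1])) \<otimes> gprod G (map (\<lambda>j. inv (t1 j)) (rev [1..<b+1]))"
      using cZ L ct1 by (intro gprod_map_mult) auto
    also have "\<dots> = gprod G (map ?c (rev [1..<b+1])) \<otimes> inv (gprod G (map t1 [1..<b+1]))"
      using L ct1 gprod_inv_rev[of "[1..<b+1]" t1] by auto
    also have "gprod G (map ?c (rev [1..<b+1])) = ?c 1"
      using dL L V5 b2 cZ center_sub by (intro gprod_single) auto
    also have "?c 1 = z" using V5[of 1] b2 by simp
    finally show ?thesis using T by (simp add: h4)
  qed
  have S2: "gprod G (map (\<lambda>j. gcomm G (inv (r2 j)) (t2 j) \<otimes> t2 j) [1..<b+1])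
       \<otimes> gprod G (map (\<lambda>j. inv (t2 j)) (rev [1..<b+1])) = inv z"
  proof -
    let ?c = "\<lambda>j. gcomm G (inv (r2 j)) (t2 j)"
    have cZ: "?c j \<in> group_center G" if "1 \<le> j" "j \<le> b" for j
      using that cr2 ct2 by (intro gcomm_center) auto
    have T: "gprod G (map t2 [1..<b+1]) \<in> carrier G" using L ct2 by (intro gprod_closed) auto
    have "gprod G (map (\<lambda>j. ?c j \<otimes> t2 j) [1..<b+1])
        = gprod G (map ?c [1..<b+1]) \<otimes> gprod G (map t2 [1..<b+1])"
      using cZ L ct2 by (intro gprod_map_mult) auto
    moreover have "gprod G (map (\<lambda>j. inv (t2 j)) (rev [1..<b+1])) = inv (gprod G (map t2 [1..<b+1]))"
      using L ct2 gprod_inv_rev[of "[1..<b+1]" t2] by auto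
    moreover have "gprod G (map ?c [1..<b+1]) = ?c 2"
      using L V6 b2 cZ center_sub by (intro gprod_single) auto
    moreover have "?c 2 = inv z" using V6[of 2] b2 by simp
    ultimately show ?thesis using T by (simp add: h4' m_assoc[symmetric])
  qed
  have REL: "(\<forall>j\<in>{1..b}. \<forall>k\<in>{1..b}.
      
        (j < k \<longrightarrow> gcomm G (r1 j) (r2 k) = \<one>\<^bsub>G\<^esub>)
      \<and> (j = k \<longrightarrow> gcomm G (r1 j) (r2 k) = \<one>\<^bsub>G\<^esub>)
      \<and> (j > k \<longrightarrow> gcomm G (r1 j) (r2 k) =
            inv\<^bsub>G\<^esub> z \<otimes>\<^bsub>G\<^esub> r2 k \<otimes>\<^bsub>G\<^esub> inv\<^bsub>G\<^esub> (r2 j) \<otimes>\<^bsub>G\<^esub> z \<otimes>\<^bsub>G\<^esub> r2 j \<otimes>\<^bsub>G\<^esub> inv\<^bsub>G\<^esub> (r2 k))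
      \<and> (j < k \<longrightarrow> gcomm G (r1 j) (t2 k) = \<one>\<^bsub>G\<^esub>)
      \<and> (j = k \<longrightarrow> gcomm G (r1 j) (t2 k) = inv\<^bsub>G\<^esub> z)
      \<and> (j > k \<longrightarrow> gcomm G (r1 j) (t2 k) = gcomm G (inv\<^bsub>G\<^esub> z) (t2 k))
      
      \<and> (j < k \<longrightarrow> gcomm G (t1 j) (r2 k) = \<one>\<^bsub>G\<^esub>)
      \<and> (j = k \<longrightarrow> gcomm G (t1 j) (r2 k) = inv\<^bsub>G\<^esub> (t2 j) \<otimes>\<^bsub>G\<^esub> z \<otimes>\<^bsub>G\<^esub> t2 j)
      \<and> (j > k \<longrightarrow> gcomm G (t1 j) (r2 k) = gcomm G (inv\<^bsub>G\<^esub> (t2 j)) z)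
      \<and> (j < k \<longrightarrow> gcomm G (t1 j) (t2 k) = \<one>\<^bsub>G\<^esub>)
      \<and> (j = k \<longrightarrow> gcomm G (t1 j) (t2 k) = gcomm G (inv\<^bsub>G\<^esub> (t2 j)) z)
      \<and> (j > k \<longrightarrow> gcomm G (t1 j) (t2 k) =
            inv\<^bsub>G\<^esub> (t2 j) \<otimes>\<^bsub>G\<^esub> z \<otimes>\<^bsub>G\<^esub> t2 j \<otimes>\<^bsub>G\<^esub> inv\<^bsub>G\<^esub> z \<otimes>\<^bsub>G\<^esub> t2 k
            \<otimes>\<^bsub>G\<^esub> z \<otimes>\<^bsub>G\<^esub> inv\<^bsub>G\<^esub> (t2 j) \<otimes>\<^bsub>G\<^esub> inv\<^bsub>G\<^esub> z \<otimes>\<^bsub>G\<^esub> t2 j \<otimes>\<^bsub>G\<^esub> inv\<^bsub>G\<^esub> (t2 k)))"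
  proof (intro ballI)
    fix j k assume j: "j \<in> {1..b}" and k: "k \<in> {1..b}"
    note facts = V1[OF j k] V2[OF j k] V3[OF j k] V4[OF j k] cr1[OF j] cr2[OF j] ct1[OF j] ct2[OF j]
       cr1[OF k] cr2[OF k] ct1[OF k] ct2[OF k]
    show "        (j < k \<longrightarrow> gcomm G (r1 j) (r2 k) = \<one>\<^bsub>G\<^esub>)
      \<and> (j = k \<longrightarrow> gcomm G (r1 j) (r2 k) = \<one>\<^bsub>G\<^esub>)
      \<and> (j > k \<longrightarrow> gcomm G (r1 j) (r2 k) =
            inv\<^bsub>G\<^esub> z \<otimes>\<^bsub>G\<^esub> r2 k \<otimes>\<^bsub>G\<^esub> inv\<^bsub>G\<^esub> (r2 j) \<otimes>\<^bsub>G\<^esub> z \<otimes>\<^bsub>G\<^esub> r2 j \<otimes>\<^bsub>G\<^esub> inv\<^bsub>G\<^esub> (r2 k))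
      \<and> (j < k \<longrightarrow> gcomm G (r1 j) (t2 k) = \<one>\<^bsub>G\<^esub>)
      \<and> (j = k \<longrightarrow> gcomm G (r1 j) (t2 k) = inv\<^bsub>G\<^esub> z)
      \<and> (j > k \<longrightarrow> gcomm G (r1 j) (t2 k) = gcomm G (inv\<^bsub>G\<^esub> z) (t2 k))
      
      \<and> (j < k \<longrightarrow> gcomm G (t1 j) (r2 k) = \<one>\<^bsub>G\<^esub>)
      \<and> (j = k \<longrightarrow> gcomm G (t1 j) (r2 k) = inv\<^bsub>G\<^esub> (t2 j) \<otimes>\<^bsub>G\<^esub> z \<otimes>\<^bsub>G\<^esub> t2 j)
      \<and> (j > k \<longrightarrow> gcomm G (t1 j) (r2 k) = gcomm G (inv\<^bsub>G\<^esub> (t2 j)) z)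
      \<and> (j < k \<longrightarrow> gcomm G (t1 j) (t2 k) = \<one>\<^bsub>G\<^esub>)
      \<and> (j = k \<longrightarrow> gcomm G (t1 j) (t2 k) = gcomm G (inv\<^bsub>G\<^esub> (t2 j)) z)
      \<and> (j > k \<longrightarrow> gcomm G (t1 j) (t2 k) =
            inv\<^bsub>G\<^esub> (t2 j) \<otimes>\<^bsub>G\<^esub> z \<otimes>\<^bsub>G\<^esub> t2 j \<otimes>\<^bsub>G\<^esub> inv\<^bsub>G\<^esub> z \<otimes>\<^bsub>G\<^esub> t2 k
            \<otimes>\<^bsub>G\<^esub> z \<otimes>\<^bsub>G\<^esub> inv\<^bsub>G\<^esub> (t2 j) \<otimes>\<^bsub>G\<^esub> inv\<^bsub>G\<^esub> z \<otimes>\<^bsub>G\<^esub> t2 j \<otimes>\<^bsub>G\<^esub> inv\<^bsub>G\<^esub> (t2 k))"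
    proof (cases "j = k")
      case True
      show ?thesis using True V1[OF k k] V2[OF k k] V3[OF k k] V4[OF k k] cr1[OF k] cr2[OF k] ct1[OF k] ct2[OF k]
        by (simp add: zc1 zc2 h1 gcomm_inv_left)
    next
      case False
      then show ?thesis using facts by (simp add: zc1 zc2 h1 h2 h4 gcomm_inv_left)
    qed
  qed
  have CAR: "\<forall>j\<in>{1..b}. r1 j \<in> carrier G \<and> t1 j \<in> carrier G \<and> r2 j \<in> carrier G \<and> t2 j \<in> carrier G"
    using cr1 ct1 cr2 ct2 by auto
  have FIN: "\<forall>j\<in>{1..b}. gcomm G (r1 j) z = gcomm G (inv (r2 j)) z \<and> gcomm G (t1 j) z = gcomm G (inv (t2 j)) z"
    using cr1 ct1 cr2 ct2 by auto
  let ?T = "r1 ` {1..b} \<union> t1 ` {1..b} \<union> r2 ` {1..b} \<union> t2 ` {1..b} \<union> {z}"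
  have Tsub: "?T \<subseteq> carrier G" using cr1 ct1 cr2 ct2 by auto
  have AB: "A i \<in> generate G ?T \<and> B i \<in> generate G ?T" if "i \<in> {1..2*b}" for i
  proof (cases "i \<le> b")
    case False
    define j where "j = i - b"
    have j: "j \<in> {1..b}" "i = b + j" using that False unfolding j_def by auto
    have "A i = t1 j" "B i = r2 j" unfolding t1_def r2_def using j by auto
    then show ?thesis using j by (auto intro!: generate.incl)
  next
    case True
    have i: "i \<in> {1..b}" using that True by auto
    have Bic: "B i \<in> carrier G" using i by (intro Bc) auto
    have A: "A i \<in> generate G ?T"
    proof (cases "i = 1")
      case True
      have c: "A 1 \<in> carrier G" "B (b+1) \<in> carrier G" using b2 by (auto intro!: Ac Bc)
      have "r1 1 \<otimes> r2 1 = A 1" unfolding r1_def r2_def using c by (simp add: h4)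
      moreover have "r1 1 \<in> generate G ?T" "r2 1 \<in> generate G ?T" using b2 by (auto intro!: generate.incl)
      ultimately show ?thesis using True generate.eng by metis
    next
      case False
      then have "A i = r1 i" unfolding r1_def by simp
      then show ?thesis using i by (auto intro!: generate.incl)
    qed
    have B: "B i \<in> generate G ?T"
    proof (cases "i = 2")
      case True
      have c: "B 2 \<in> carrier G" "A (b+2) \<in> carrier G" using b2 by (auto intro!: Ac Bc)
      have "t2 2 \<otimes> t1 2 = inv (B 2)" unfolding t2_def t1_def using c by (simp add: h4)
      moreover have "t2 2 \<in> generate G ?T" "t1 2 \<in> generate G ?T" using b2 by (auto intro!: generate.incl)
      ultimately have "inv (inv (B 2)) \<in> generate G ?T" using generate.eng generate_m_inv_closed[OF Tsub] by metis
      then show ?thesis using True c by simp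
    next
      case False
      then have "B i = inv (t2 i)" unfolding t2_def using Bic by simp
      moreover have "t2 i \<in> generate G ?T" using i by (auto intro!: generate.incl)
      ultimately show ?thesis using generate_m_inv_closed[OF Tsub] by simp
    qed
    show ?thesis using A B by simp
  qed
  have GEN: "generate G ?T = carrier G"
  proof
    show "generate G ?T \<subseteq> carrier G" using generate_incl[OF Tsub] .
    have sgT: "subgroup (generate G ?T) G" using generate_is_subgroup[OF Tsub] .
    have g1: "generate G (A ` {1..2*b} \<union> B ` {1..2*b}) \<subseteq> generate G ?T"
      using AB by (intro generate_subgroup_incl[OF _ sgT]) auto
    have g2: "generate G {z} \<subseteq> generate G ?T"
      by (intro generate_subgroup_incl[OF _ sgT]) (auto intro: generate.incl)
    show "carrier G \<subseteq> generate G ?T"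
    proof
      fix g assume "g \<in> carrier G"
      then obtain h c where "h \<in> generate G (A ` {1..2*b} \<union> B ` {1..2*b})" "c \<in> generate G {z}" "g = h \<otimes> c"
        using gen by blast
      then show "g \<in> generate G ?T" using g1 g2 subgroup.m_closed[OF sgT] by blast
    qed
  qed
  have DDK: "diagonal_double_kodaira G b p r1 t1 r2 t2 z"
    unfolding diagonal_double_kodaira_def by (intro conjI CAR z_carrier GEN ordz S1 S2 REL FIN)
  have NS: "\<not> ddk_strong G b r1 t1 r2 t2 z"
  proof
    assume "ddk_strong G b r1 t1 r2 t2 z"
    then have K: "generate G (r1 ` {1..b} \<union> t1 ` {1..b} \<union> {z}) = carrier G" unfolding ddk_strong_def by simp
    have A2: "A 2 \<in> carrier G" "B 2 \<in> carrier G" using b2 by (auto intro!: Ac Bc)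
    have w1: "gcomm G (r1 j) (A 2) = \<one>" if "j \<in> {1..b}" for j using that b2 unfolding r1_def by (auto simp: simps)
    have w2: "gcomm G (t1 j) (A 2) = \<one>" if "j \<in> {1..b}" for j using that b2 unfolding t1_def by (auto simp: simps)
    have "r1 ` {1..b} \<union> t1 ` {1..b} \<union> {z} \<subseteq> cent {A 2}"
      unfolding cent_def using w1 w2 cr1 ct1 A2 gcomm_one_iff zcomm by auto
    then have "generate G (r1 ` {1..b} \<union> t1 ` {1..b} \<union> {z}) \<subseteq> cent {A 2}"
      using generate_subgroup_incl cent_subgroup A2 by auto
    moreover have "B 2 \<notin> cent {A 2}"
    proof
      assume "B 2 \<in> cent {A 2}"
      then have "gcomm G (B 2) (A 2) = \<one>" using gcomm_one_iff A2 unfolding cent_def by auto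
      moreover have "gcomm G (B 2) (A 2) = inv z" using rBA[of 2 2] b2 by simp
      ultimately show False using z1 inv_eq_1_iff by (metis z_carrier inv_inv inv_one)
    qed
    ultimately show False using K A2 by auto
  qed
  show ?thesis using DDK NS by blast

qed

end


theorem theorem2p10:
  fixes G :: "('a, 'c) monoid_scheme" and b p :: nat
  assumes "group G" and "b \<ge> 2" and "Factorial_Ring.prime p" and "p \<ge> 5"
    and "extra_special G p" and "order G = p ^ (4 * b + 1)"
  shows "\<exists>r1 t1 r2 t2 z. diagonal_double_kodaira G b p r1 t1 r2 t2 z
                         \<and> \<not> ddk_strong G b r1 t1 r2 t2 z"
proof -
  note gG = assms(1) and b2 = assms(2) and pp = assms(3) and p5 = assms(4)
    and es = assms(5) and ordG = assms(6)
  interpret group G by (rule gG)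
  let ?Z = "group_center G"
  have fin: "finite (carrier G)" and cZ: "card ?Z = p" and cg: "comm_group (G Mod ?Z)"
    using es unfolding extra_special_def by auto
  have gZ: "gcomm G x y \<in> ?Z" if "x \<in> carrier G" "y \<in> carrier G" for x y
    using gcomm_in_center[OF cg that] .
  interpret cgrp G
  proof
    fix x y g assume "x \<in> carrier G" "y \<in> carrier G" "g \<in> carrier G"
    then show "gcomm G x y \<otimes>\<^bsub>G\<^esub> g = g \<otimes>\<^bsub>G\<^esub> gcomm G x y" using gZ unfolding group_center_def by auto
  qed
  have finZ: "finite ?Z" using fin center_sub finite_subset by blast
  have "\<not> ?Z \<subseteq> {\<one>\<^bsub>G\<^esub>}"
  proof
    assume "?Z \<subseteq> {\<one>\<^bsub>G\<^esub>}"
    then have "card ?Z \<le> 1" using card_mono[of "{\<one>\<^bsub>G\<^esub>}"] by fastforce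
    then show False using cZ p5 by simp
  qed
  then obtain z where zZ: "z \<in> ?Z" and z1: "z \<noteq> \<one>\<^bsub>G\<^esub>" by auto
  have zc: "z \<in> carrier G" using zZ center_sub by auto
  have gzZ: "generate G {z} \<subseteq> ?Z" using zZ center_subgroup by (intro generate_subgroup_incl) auto
  have oz: "ord z = card (generate G {z})" using generate_pow_card[OF zc] .
  have ozle: "ord z \<le> p" using oz gzZ card_mono[OF finZ gzZ] cZ by simp
  have "ord z dvd p ^ (4 * b + 1)" using ord_dvd_group_order[OF zc] ordG by simp
  then obtain i where i: "ord z = p ^ i" using divides_primepow_nat[OF pp] by blast
  have "ord z \<noteq> 1" using ord_eq_1[OF zc] z1 by simp
  then have "i \<noteq> 0" using i by auto
  moreover have "i < 2"
  proof (rule ccontr)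
    assume "\<not> i < 2"
    then have "p ^ 2 \<le> p ^ i" using p5 by (intro power_increasing) auto
    moreover have "p < p ^ 2" using p5 by (simp add: power2_eq_square)
    ultimately show False using i ozle by simp
  qed
  ultimately have ordz: "ord z = p" using i by (cases i) (auto simp: numeral_2_eq_2 less_Suc_eq)
  have gzeq: "generate G {z} = ?Z" using card_subset_eq[OF finZ gzZ] oz ordz cZ by simp
  have comm_z: "\<exists>k::nat. gcomm G x y = z [^]\<^bsub>G\<^esub> k" if "x \<in> carrier G" "y \<in> carrier G" for x y
  proof -
    have "gcomm G x y \<in> generate G {z}" using gZ[OF that] gzeq by simp
    then show ?thesis using generate_pow_nat[OF zc] ordz pp prime_gt_0_nat by auto
  qed
  interpret E: esg G z p
    by (unfold_locales) (use fin pp zZ ordz cZ comm_z in auto)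
  have "order G = p ^ (2 * (2 * b) + 1)" using ordG by (simp add: algebra_simps)
  then obtain A B where gd: "E.good (2 * b) A B" using E.build[of "2*b" "2*b"] by auto
  let ?S = "A ` {1..2*b} \<union> B ` {1..2*b}"
  have Ac: "\<And>i. 1 \<le> i \<Longrightarrow> i \<le> 2*b \<Longrightarrow> A i \<in> carrier G"
    and Bc: "\<And>i. 1 \<le> i \<Longrightarrow> i \<le> 2*b \<Longrightarrow> B i \<in> carrier G"
    using gd unfolding E.good_def by auto
  have rel: "\<And>i j. 1 \<le> i \<Longrightarrow> i \<le> 2*b \<Longrightarrow> 1 \<le> j \<Longrightarrow> j \<le> 2*b \<Longrightarrow>
       gcomm G (A i) (B j) = (if i = j then z else \<one>\<^bsub>G\<^esub>) \<and> gcomm G (A i) (A j) = \<one>\<^bsub>G\<^esub> \<and> gcomm G (B i) (B j) = \<one>\<^bsub>G\<^esub>"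
    using gd unfolding E.good_def by auto
  have cardS: "card (cent ?S) * p ^ (2 * (2 * b)) = order G" using gd unfolding E.good_def by auto
  have decS: "\<forall>g\<in>carrier G. \<exists>h\<in>generate G ?S. \<exists>c\<in>cent ?S. g = h \<otimes>\<^bsub>G\<^esub> c"
    using gd unfolding E.good_def by auto
  have "card (cent ?S) * p ^ (4 * b) = p * p ^ (4 * b)" using cardS ordG by (simp add: algebra_simps)
  then have cS: "card (cent ?S) = p" using pp prime_gt_0_nat by simp
  have ZS: "?Z \<subseteq> cent ?S" unfolding cent_def group_center_def using Ac Bc by auto
  have finS: "finite (cent ?S)" using fin E.cent_carrier finite_subset by blast
  have "?Z = cent ?S" using card_subset_eq[OF finS ZS] cS cZ by simp
  then have gen: "\<forall>g\<in>carrier G. \<exists>h\<in>generate G ?S. \<exists>c\<in>generate G {z}. g = h \<otimes>\<^bsub>G\<^esub> c"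
    using decS gzeq by simp
  show ?thesis
    using E.ddk[OF b2 z1 Ac Bc _ _ _ gen] rel by blast
qed

end
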